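(* Let $A,B,C,D,E\in\mathbb{C}$ with $E\neq0$, $M=\{(x,y,z)\in\mathbb{C}^3 : x^2+y^2+z^2+Exyz-Ax-By-Cz-D=0\}$, and let $V^x=(2z+Exy-C)\partial_y-(2y+Exz-B)\partial_z$, $V^y=-(2z+Exy-C)\partial_x+(2x+Eyz-A)\partial_z$, $V^z=(2y+Exz-B)\partial_x-(2x+Eyz-A)\partial_y$ (vector fields tangent to $M$). For every entire holomorphic function $f\colon\mathbb{C}\to\mathbb{C}$, the vector fields $f(x)V^x$, $f(y)V^y$, $f(z)V^z$ on $M$ are complete. *)

theory Defs
  imports "HOL-Analysis.Analysis"
begin

type_synonym c3 = "complex \<times> complex \<times> complex"

definition Msurf :: "complex \<Rightarrow> complex \<Rightarrow> complex \<Rightarrow> complex \<Rightarrow> complex \<Rightarrow> c3 set" where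
  "Msurf A B C D E = {(x,y,z). x^2 + y^2 + z^2 + E*x*y*z - A*x - B*y - C*z - D = 0}"

definition Vx :: "complex \<Rightarrow> complex \<Rightarrow> complex \<Rightarrow> complex \<Rightarrow> c3 \<Rightarrow> c3" where
  "Vx A B C E p = (case p of (x,y,z) \<Rightarrow>
     (0, 2*z + E*x*y - C, - (2*y + E*x*z - B)))"

definition Vy :: "complex \<Rightarrow> complex \<Rightarrow> complex \<Rightarrow> complex \<Rightarrow> c3 \<Rightarrow> c3" where
  "Vy A B C E p = (case p of (x,y,z) \<Rightarrow>
     (- (2*z + E*x*y - C), 0, 2*x + E*y*z - A))"

definition Vz :: "complex \<Rightarrow> complex \<Rightarrow> complex \<Rightarrow> complex \<Rightarrow> c3 \<Rightarrow> c3" where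
  "Vz A B C E p = (case p of (x,y,z) \<Rightarrow>
     (2*y + E*x*z - B, - (2*x + E*y*z - A), 0))"

definition cscale :: "complex \<Rightarrow> c3 \<Rightarrow> c3" where
  "cscale c p = (case p of (a,b,d) \<Rightarrow> (c*a, c*b, c*d))"

definition complete_vf :: "c3 set \<Rightarrow> (c3 \<Rightarrow> c3) \<Rightarrow> bool" where
  "complete_vf M F \<longleftrightarrow> (\<forall>p\<in>M. \<exists>g1 g2 g3 :: complex \<Rightarrow> complex.
      (g1 0, g2 0, g3 0) = p \<and>
      (\<forall>t. (g1 t, g2 t, g3 t) \<in> M \<and>
           (g1 has_field_derivative fst (F (g1 t, g2 t, g3 t))) (at t) \<and>
           (g2 has_field_derivative fst (snd (F (g1 t, g2 t, g3 t)))) (at t) \<and>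
           (g3 has_field_derivative snd (snd (F (g1 t, g2 t, g3 t)))) (at t)))"

end

theory Submission
  imports Defs
begin

lemma d1: "((\<lambda>t. u0 + c * t * p + (c * t)^2/2 * r) has_field_derivative (c * p + c^2 * t * r)) (at (t::complex))"
  by (auto intro!: derivative_eq_intros simp: power2_eq_square)
lemma d2: "((\<lambda>t::complex. ys + U0 * (exp(l * c * t)+exp(-(l * c * t)))/2 + K * (exp(l * c * t)-exp(-(l * c * t)))/2) has_field_derivative
   (l * c * (U0 * (exp(l * c * t) - exp(-(l * c * t)))/2 + K * (exp(l * c * t) + exp(-(l * c * t)))/2))) (at t)"
  by (auto intro!: derivative_eq_intros simp: field_simps)

lemma lin_sol:
  fixes a c B C u0 w0 :: complex
  shows "\<exists>gu gv. gu 0 = u0 \<and> gv 0 = w0 \<and> (\<forall>t.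
     (gu has_field_derivative c * (a * gu t + 2 * gv t - C)) (at t) \<and>
     (gv has_field_derivative c * (-2 * gu t - a * gv t + B)) (at t))"
proof (cases "a^2 = 4")
  case True
  define p where "p = a * u0 + 2 * w0 - C"
  define q where "q = -2 * u0 - a * w0 + B"
  define r where "r = 2 * B - a * C"
  define s where "s = 2 * C - a * B"
  define gu where "gu = (\<lambda>t. u0 + c * t * p + (c * t)^2/2 * r)"
  define gv where "gv = (\<lambda>t. w0 + c * t * q + (c * t)^2/2 * s)"
  have a2: "a * a = 4" using True by (simp add: power2_eq_square)
  have "(gu has_field_derivative c * (a * gu t + 2 * gv t - C)) (at t) \<and>
     (gv has_field_derivative c * (-2 * gu t - a * gv t + B)) (at t)" for t
  proof
    have h1: "a * p + 2 * q = r" and h2: "a * r + 2 * s = 0"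
      unfolding p_def q_def r_def s_def using a2 by (simp_all add: algebra_simps flip: mult.assoc)
    have "a * gu t + 2 * gv t - C = (a * u0 + 2 * w0 - C) + c * t * (a * p + 2 * q) + (c * t)^2/2 * (a * r + 2 * s)"
      unfolding gu_def gv_def by (simp add: algebra_simps)
    also have "\<dots> = p + c * t * r" unfolding h1 h2 by (simp add: p_def)
    finally have "c * p + c^2 * t * r = c * (a * gu t + 2 * gv t - C)"
      by (simp add: algebra_simps power2_eq_square)
    then show "(gu has_field_derivative c * (a * gu t + 2 * gv t - C)) (at t)"
      using d1[of u0 c p r t] unfolding gu_def by simp
  next
    have h1: "-2 * p - a * q = s" and h2: "-2 * r - a * s = 0"
      unfolding p_def q_def r_def s_def using a2 by (simp_all add: algebra_simps flip: mult.assoc)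
    have "-2 * gu t - a * gv t + B = (-2 * u0 - a * w0 + B) + c * t * (-2 * p - a * q) + (c * t)^2/2 * (-2 * r - a * s)"
      unfolding gu_def gv_def by (simp add: algebra_simps diff_divide_distrib add_divide_distrib)
    also have "\<dots> = q + c * t * s" unfolding h1 h2 by (simp add: q_def)
    finally have "c * q + c^2 * t * s = c * (-2 * gu t - a * gv t + B)"
      by (simp add: algebra_simps power2_eq_square)
    then show "(gv has_field_derivative c * (-2 * gu t - a * gv t + B)) (at t)"
      using d1[of w0 c q s t] unfolding gv_def by simp
  qed
  then show ?thesis by (rule_tac x=gu in exI, rule_tac x=gv in exI) (simp add: gu_def gv_def)
next
  case False
  define l where "l = csqrt (a^2 - 4)"
  have ll: "l * l = a^2 - 4" unfolding l_def by (metis power2_csqrt power2_eq_square)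
  have l0: "l \<noteq> 0" using False ll by auto
  have d: "a^2 - 4 \<noteq> 0" using False by simp
  define ys where "ys = (a * C - 2 * B)/(a^2-4)"
  define zs where "zs = (a * B - 2 * C)/(a^2-4)"
  define U0 where "U0 = u0 - ys"
  define V0 where "V0 = w0 - zs"
  define P where "P = a * U0 + 2 * V0"
  define Q where "Q = -2 * U0 - a * V0"
  define K where "K = P / l"
  define K2 where "K2 = Q / l"
  have lK: "l * K = P" and lK2: "l * K2 = Q" using l0 unfolding K_def K2_def by auto
  have fy: "a * ys + 2 * zs = C"
  proof -
    have "a * ys + 2 * zs = (a * (a * C - 2 * B) + 2 * (a * B - 2 * C))/(a^2-4)"
      unfolding ys_def zs_def by (simp add: add_divide_distrib)
    also have "\<dots> = ((a^2-4) * C)/(a^2-4)"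
      by (rule arg_cong[where f="\<lambda>x. x/(a^2-4)"]) (simp add: algebra_simps power2_eq_square)
    finally show ?thesis using d by simp
  qed
  have fz: "-2 * ys - a * zs = -B"
  proof -
    have "-2 * ys - a * zs = (-2 * (a * C - 2 * B) - a * (a * B - 2 * C))/(a^2-4)"
      unfolding ys_def zs_def by (simp add: diff_divide_distrib right_diff_distrib)
    also have "\<dots> = ((a^2-4) * (-B))/(a^2-4)"
      by (rule arg_cong[where f="\<lambda>x. x/(a^2-4)"]) (simp add: algebra_simps power2_eq_square)
    finally show ?thesis using d by simp
  qed
  have k1: "a * K + 2 * K2 = l * U0"
  proof -
    have "l * (a * K + 2 * K2) = a * (l * K) + 2 * (l * K2)" by (simp add: algebra_simps)
    also have "\<dots> = (a^2 - 4) * U0" unfolding lK lK2 P_def Q_def by (simp add: algebra_simps power2_eq_square)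
    finally have "l * (a * K + 2 * K2) = l * (l * U0)" using ll by simp
    then show ?thesis using l0 by simp
  qed
  have k2: "-2 * K - a * K2 = l * V0"
  proof -
    have "l * (-2 * K - a * K2) = -2 * (l * K) - a * (l * K2)" by (simp add: algebra_simps)
    also have "\<dots> = (a^2 - 4) * V0" unfolding lK lK2 P_def Q_def by (simp add: algebra_simps power2_eq_square)
    finally have "l * (-2 * K - a * K2) = l * (l * V0)" using ll by simp
    then show ?thesis using l0 by simp
  qed
  define gu where "gu = (\<lambda>t::complex. ys + U0 * (exp(l * c * t)+exp(-(l * c * t)))/2 + K * (exp(l * c * t)-exp(-(l * c * t)))/2)"
  define gv where "gv = (\<lambda>t::complex. zs + V0 * (exp(l * c * t)+exp(-(l * c * t)))/2 + K2 * (exp(l * c * t)-exp(-(l * c * t)))/2)"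
  have "(gu has_field_derivative c * (a * gu t + 2 * gv t - C)) (at t) \<and>
     (gv has_field_derivative c * (-2 * gu t - a * gv t + B)) (at t)" for t
  proof
    define E1 where "E1 = exp(l * c * t)"
    define E2 where "E2 = exp(-(l * c * t))"
    have "a * gu t + 2 * gv t - C = (a * ys + 2 * zs - C) + P * (E1 + E2)/2 + (a * K + 2 * K2) * (E1 - E2)/2"
      unfolding gu_def gv_def E1_def E2_def P_def by (simp add: algebra_simps add_divide_distrib diff_divide_distrib)
    also have "\<dots> = l * (U0 * (E1 - E2)/2 + K * (E1 + E2)/2)"
      unfolding fy k1 lK[symmetric] by (simp add: algebra_simps)
    finally have e: "c * (a * gu t + 2 * gv t - C) = l * c * (U0 * (E1 - E2)/2 + K * (E1 + E2)/2)" by simp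
    show "(gu has_field_derivative c * (a * gu t + 2 * gv t - C)) (at t)"
      by (subst e, unfold E1_def E2_def gu_def, rule d2)
  next
    define E1 where "E1 = exp(l * c * t)"
    define E2 where "E2 = exp(-(l * c * t))"
    have "-2 * gu t - a * gv t + B = (-2 * ys - a * zs + B) + Q * (E1 + E2)/2 + (-2 * K - a * K2) * (E1 - E2)/2"
      unfolding gu_def gv_def E1_def E2_def Q_def by (simp add: algebra_simps add_divide_distrib diff_divide_distrib)
    also have "\<dots> = l * (V0 * (E1 - E2)/2 + K2 * (E1 + E2)/2)"
      unfolding fz k2 lK2[symmetric] by (simp add: algebra_simps)
    finally have e: "c * (-2 * gu t - a * gv t + B) = l * c * (V0 * (E1 - E2)/2 + K2 * (E1 + E2)/2)" by simp
    show "(gv has_field_derivative c * (-2 * gu t - a * gv t + B)) (at t)"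
      by (subst e, unfold E1_def E2_def gv_def, rule d2)
  qed
  moreover have "gu 0 = u0" "gv 0 = w0" unfolding gu_def gv_def U0_def V0_def by (simp_all add: diff_divide_distrib)
  ultimately show ?thesis by blast
qed

lemma conserv:
  fixes gu gv :: "complex \<Rightarrow> complex"
  assumes D: "\<forall>t. (gu has_field_derivative c * (a * gu t + 2 * gv t - C)) (at t) \<and>
     (gv has_field_derivative c * (-2 * gu t - a * gv t + B)) (at t)"
  shows "(gu t)^2 + (gv t)^2 + a * gu t * gv t - B * gu t - C * gv t
       = (gu 0)^2 + (gv 0)^2 + a * gu 0 * gv 0 - B * gu 0 - C * gv 0"
proof -
  define h where "h = (\<lambda>t. (gu t)^2 + (gv t)^2 + a * gu t * gv t - B * gu t - C * gv t)"
  have "(h has_field_derivative 0) (at x within UNIV)" for x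
  proof -
    have d1: "(gu has_field_derivative c * (a * gu x + 2 * gv x - C)) (at x)" using D by blast
    have d2: "(gv has_field_derivative c * (-2 * gu x - a * gv x + B)) (at x)" using D by blast
    have "(h has_field_derivative
        (2 * gu x * (c * (a * gu x + 2 * gv x - C)) + 2 * gv x * (c * (-2 * gu x - a * gv x + B))
         + a * (c * (a * gu x + 2 * gv x - C) * gv x + gu x * (c * (-2 * gu x - a * gv x + B)))
         - B * (c * (a * gu x + 2 * gv x - C)) - C * (c * (-2 * gu x - a * gv x + B)))) (at x)"
      unfolding h_def
      apply (rule derivative_eq_intros d1 d2 refl)+
      by (simp add: algebra_simps power2_eq_square)
    moreover have "2 * gu x * (c * (a * gu x + 2 * gv x - C)) + 2 * gv x * (c * (-2 * gu x - a * gv x + B))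
         + a * (c * (a * gu x + 2 * gv x - C) * gv x + gu x * (c * (-2 * gu x - a * gv x + B)))
         - B * (c * (a * gu x + 2 * gv x - C)) - C * (c * (-2 * gu x - a * gv x + B)) = 0"
      by (simp add: algebra_simps)
    ultimately show ?thesis by simp
  qed
  then obtain k where "\<forall>x\<in>UNIV. h x = k"
    using has_field_derivative_zero_constant[of UNIV h] by auto
  then have "h t = h 0" by simp
  then show ?thesis unfolding h_def .
qed

lemma flow:
  fixes a c B C u0 w0 :: complex
  shows "\<exists>gu gv. gu 0 = u0 \<and> gv 0 = w0 \<and> (\<forall>t.
     (gu has_field_derivative c * (a * gu t + 2 * gv t - C)) (at t) \<and>
     (gv has_field_derivative c * (-2 * gu t - a * gv t + B)) (at t) \<and>
     (gu t)^2 + (gv t)^2 + a * gu t * gv t - B * gu t - C * gv t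
       = u0^2 + w0^2 + a * u0 * w0 - B * u0 - C * w0)"
proof -
  obtain gu gv where g: "gu 0 = u0" "gv 0 = w0" and D: "\<forall>t.
     (gu has_field_derivative c * (a * gu t + 2 * gv t - C)) (at t) \<and>
     (gv has_field_derivative c * (-2 * gu t - a * gv t + B)) (at t)"
    using lin_sol[of u0 w0 c a C B] by blast
  show ?thesis using g D conserv[OF D] by (intro exI[of _ gu] exI[of _ gv]) auto
qed

lemma cvx:
  "complete_vf (Msurf A B C D E) (\<lambda>p. cscale (f (fst p)) (Vx A B C E p))"
  unfolding complete_vf_def
proof
  fix p assume "p \<in> Msurf A B C D E"
  obtain x0 y0 z0 where p: "p = (x0, y0, z0)" by (cases p) auto
  have M: "x0^2 + y0^2 + z0^2 + E*x0*y0*z0 - A*x0 - B*y0 - C*z0 - D = 0"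
    using \<open>p \<in> _\<close> unfolding p Msurf_def by simp
  obtain gu gv where g: "gu 0 = y0" "gv 0 = z0" and D: "\<forall>t.
     (gu has_field_derivative f x0 * (E * x0 * gu t + 2 * gv t - C)) (at t) \<and>
     (gv has_field_derivative f x0 * (-2 * gu t - E * x0 * gv t + B)) (at t) \<and>
     (gu t)^2 + (gv t)^2 + E * x0 * gu t * gv t - B * gu t - C * gv t
       = y0^2 + z0^2 + E * x0 * y0 * z0 - B * y0 - C * z0"
    using flow[of y0 z0 "f x0" "E * x0" C B] by blast
  show "\<exists>g1 g2 g3 :: complex \<Rightarrow> complex.
      (g1 0, g2 0, g3 0) = p \<and>
      (\<forall>t. (g1 t, g2 t, g3 t) \<in> Msurf A B C D E \<and>
           (g1 has_field_derivative fst (cscale (f (fst (g1 t, g2 t, g3 t))) (Vx A B C E (g1 t, g2 t, g3 t)))) (at t) \<and>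
           (g2 has_field_derivative fst (snd (cscale (f (fst (g1 t, g2 t, g3 t))) (Vx A B C E (g1 t, g2 t, g3 t))))) (at t) \<and>
           (g3 has_field_derivative snd (snd (cscale (f (fst (g1 t, g2 t, g3 t))) (Vx A B C E (g1 t, g2 t, g3 t))))) (at t))"
  proof (rule exI[of _ "\<lambda>_. x0"], rule exI[of _ gu], rule exI[of _ gv], intro conjI allI)
    show "(x0, gu 0, gv 0) = p" using g p by simp
  next
    fix t
    have e: "(gu t)^2 + (gv t)^2 + E * x0 * gu t * gv t - B * gu t - C * gv t
       = y0^2 + z0^2 + E * x0 * y0 * z0 - B * y0 - C * z0" using D by blast
    show "(x0, gu t, gv t) \<in> Msurf A B C D E"
    proof -
      have "x0^2 + (gu t)^2 + (gv t)^2 + E*x0*(gu t)*(gv t) - A*x0 - B*(gu t) - C*(gv t) - D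
          = x0^2 - A*x0 - D + ((gu t)^2 + (gv t)^2 + E * x0 * gu t * gv t - B * gu t - C * gv t)"
        by (simp add: algebra_simps)
      also have "\<dots> = x0^2 - A*x0 - D + (y0^2 + z0^2 + E * x0 * y0 * z0 - B * y0 - C * z0)"
        by (simp only: e)
      also have "\<dots> = x0^2 + y0^2 + z0^2 + E*x0*y0*z0 - A*x0 - B*y0 - C*z0 - D"
        by (simp add: algebra_simps)
      finally show ?thesis unfolding Msurf_def using M by simp
    qed
    show "((\<lambda>_. x0) has_field_derivative fst (cscale (f (fst (x0, gu t, gv t))) (Vx A B C E (x0, gu t, gv t)))) (at t)"
      by (simp add: cscale_def Vx_def)
    have "(gu has_field_derivative f x0 * (E * x0 * gu t + 2 * gv t - C)) (at t)" using D by blast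
    then show "(gu has_field_derivative fst (snd (cscale (f (fst (x0, gu t, gv t))) (Vx A B C E (x0, gu t, gv t))))) (at t)"
      by (simp add: cscale_def Vx_def algebra_simps)
    have "(gv has_field_derivative f x0 * (-2 * gu t - E * x0 * gv t + B)) (at t)" using D by blast
    then show "(gv has_field_derivative snd (snd (cscale (f (fst (x0, gu t, gv t))) (Vx A B C E (x0, gu t, gv t))))) (at t)"
      by (simp add: cscale_def Vx_def algebra_simps)
  qed
qed

lemma cvy:
  "complete_vf (Msurf A B C D E) (\<lambda>p. cscale (f (fst (snd p))) (Vy A B C E p))"
  unfolding complete_vf_def
proof
  fix p assume "p \<in> Msurf A B C D E"
  obtain x0 y0 z0 where p: "p = (x0, y0, z0)" by (cases p) auto
  have M: "x0^2 + y0^2 + z0^2 + E*x0*y0*z0 - A*x0 - B*y0 - C*z0 - D = 0"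
    using \<open>p \<in> _\<close> unfolding p Msurf_def by simp
  obtain gu gv where g: "gu 0 = z0" "gv 0 = x0" and D: "\<forall>t.
     (gu has_field_derivative f y0 * (E * y0 * gu t + 2 * gv t - A)) (at t) \<and>
     (gv has_field_derivative f y0 * (-2 * gu t - E * y0 * gv t + C)) (at t) \<and>
     (gu t)^2 + (gv t)^2 + E * y0 * gu t * gv t - C * gu t - A * gv t
       = z0^2 + x0^2 + E * y0 * z0 * x0 - C * z0 - A * x0"
    using flow[of z0 x0 "f y0" "E * y0" A C] by blast
  show "\<exists>g1 g2 g3 :: complex \<Rightarrow> complex.
      (g1 0, g2 0, g3 0) = p \<and>
      (\<forall>t. (g1 t, g2 t, g3 t) \<in> Msurf A B C D E \<and>
           (g1 has_field_derivative fst (cscale (f (fst (snd (g1 t, g2 t, g3 t)))) (Vy A B C E (g1 t, g2 t, g3 t)))) (at t) \<and>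
           (g2 has_field_derivative fst (snd (cscale (f (fst (snd (g1 t, g2 t, g3 t)))) (Vy A B C E (g1 t, g2 t, g3 t))))) (at t) \<and>
           (g3 has_field_derivative snd (snd (cscale (f (fst (snd (g1 t, g2 t, g3 t)))) (Vy A B C E (g1 t, g2 t, g3 t))))) (at t))"
  proof (rule exI[of _ gv], rule exI[of _ "\<lambda>_. y0"], rule exI[of _ gu], intro conjI allI)
    show "(gv 0, y0, gu 0) = p" using g p by simp
  next
    fix t
    have e: "(gu t)^2 + (gv t)^2 + E * y0 * gu t * gv t - C * gu t - A * gv t
       = z0^2 + x0^2 + E * y0 * z0 * x0 - C * z0 - A * x0" using D by blast
    show "(gv t, y0, gu t) \<in> Msurf A B C D E"
    proof -
      have "(gv t)^2 + y0^2 + (gu t)^2 + E*(gv t)*y0*(gu t) - A*(gv t) - B*y0 - C*(gu t) - D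
          = y0^2 - B*y0 - D + ((gu t)^2 + (gv t)^2 + E * y0 * gu t * gv t - C * gu t - A * gv t)"
        by (simp add: algebra_simps)
      also have "\<dots> = y0^2 - B*y0 - D + (z0^2 + x0^2 + E * y0 * z0 * x0 - C * z0 - A * x0)"
        by (simp only: e)
      also have "\<dots> = x0^2 + y0^2 + z0^2 + E*x0*y0*z0 - A*x0 - B*y0 - C*z0 - D"
        by (simp add: algebra_simps)
      finally show ?thesis unfolding Msurf_def using M by simp
    qed
    show "((\<lambda>_. y0) has_field_derivative fst (snd (cscale (f (fst (snd (gv t, y0, gu t)))) (Vy A B C E (gv t, y0, gu t))))) (at t)"
      by (simp add: cscale_def Vy_def)
    have "(gu has_field_derivative f y0 * (E * y0 * gu t + 2 * gv t - A)) (at t)" using D by blast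
    then show "(gu has_field_derivative snd (snd (cscale (f (fst (snd (gv t, y0, gu t)))) (Vy A B C E (gv t, y0, gu t))))) (at t)"
      by (simp add: cscale_def Vy_def algebra_simps)
    have "(gv has_field_derivative f y0 * (-2 * gu t - E * y0 * gv t + C)) (at t)" using D by blast
    then show "(gv has_field_derivative fst (cscale (f (fst (snd (gv t, y0, gu t)))) (Vy A B C E (gv t, y0, gu t)))) (at t)"
      by (simp add: cscale_def Vy_def algebra_simps)
  qed
qed

lemma cvz:
  "complete_vf (Msurf A B C D E) (\<lambda>p. cscale (f (snd (snd p))) (Vz A B C E p))"
  unfolding complete_vf_def
proof
  fix p assume "p \<in> Msurf A B C D E"
  obtain x0 y0 z0 where p: "p = (x0, y0, z0)" by (cases p) auto
  have M: "x0^2 + y0^2 + z0^2 + E*x0*y0*z0 - A*x0 - B*y0 - C*z0 - D = 0"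
    using \<open>p \<in> _\<close> unfolding p Msurf_def by simp
  obtain gu gv where g: "gu 0 = x0" "gv 0 = y0" and D: "\<forall>t.
     (gu has_field_derivative f z0 * (E * z0 * gu t + 2 * gv t - B)) (at t) \<and>
     (gv has_field_derivative f z0 * (-2 * gu t - E * z0 * gv t + A)) (at t) \<and>
     (gu t)^2 + (gv t)^2 + E * z0 * gu t * gv t - A * gu t - B * gv t
       = x0^2 + y0^2 + E * z0 * x0 * y0 - A * x0 - B * y0"
    using flow[of x0 y0 "f z0" "E * z0" B A] by blast
  show "\<exists>g1 g2 g3 :: complex \<Rightarrow> complex.
      (g1 0, g2 0, g3 0) = p \<and>
      (\<forall>t. (g1 t, g2 t, g3 t) \<in> Msurf A B C D E \<and>
           (g1 has_field_derivative fst (cscale (f (snd (snd (g1 t, g2 t, g3 t)))) (Vz A B C E (g1 t, g2 t, g3 t)))) (at t) \<and>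
           (g2 has_field_derivative fst (snd (cscale (f (snd (snd (g1 t, g2 t, g3 t)))) (Vz A B C E (g1 t, g2 t, g3 t))))) (at t) \<and>
           (g3 has_field_derivative snd (snd (cscale (f (snd (snd (g1 t, g2 t, g3 t)))) (Vz A B C E (g1 t, g2 t, g3 t))))) (at t))"
  proof (rule exI[of _ gu], rule exI[of _ gv], rule exI[of _ "\<lambda>_. z0"], intro conjI allI)
    show "(gu 0, gv 0, z0) = p" using g p by simp
  next
    fix t
    have e: "(gu t)^2 + (gv t)^2 + E * z0 * gu t * gv t - A * gu t - B * gv t
       = x0^2 + y0^2 + E * z0 * x0 * y0 - A * x0 - B * y0" using D by blast
    show "(gu t, gv t, z0) \<in> Msurf A B C D E"
    proof -
      have "(gu t)^2 + (gv t)^2 + z0^2 + E*(gu t)*(gv t)*z0 - A*(gu t) - B*(gv t) - C*z0 - D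
          = z0^2 - C*z0 - D + ((gu t)^2 + (gv t)^2 + E * z0 * gu t * gv t - A * gu t - B * gv t)"
        by (simp add: algebra_simps)
      also have "\<dots> = z0^2 - C*z0 - D + (x0^2 + y0^2 + E * z0 * x0 * y0 - A * x0 - B * y0)"
        by (simp only: e)
      also have "\<dots> = x0^2 + y0^2 + z0^2 + E*x0*y0*z0 - A*x0 - B*y0 - C*z0 - D"
        by (simp add: algebra_simps)
      finally show ?thesis unfolding Msurf_def using M by simp
    qed
    show "((\<lambda>_. z0) has_field_derivative snd (snd (cscale (f (snd (snd (gu t, gv t, z0)))) (Vz A B C E (gu t, gv t, z0))))) (at t)"
      by (simp add: cscale_def Vz_def)
    have "(gu has_field_derivative f z0 * (E * z0 * gu t + 2 * gv t - B)) (at t)" using D by blast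
    then show "(gu has_field_derivative fst (cscale (f (snd (snd (gu t, gv t, z0)))) (Vz A B C E (gu t, gv t, z0)))) (at t)"
      by (simp add: cscale_def Vz_def algebra_simps)
    have "(gv has_field_derivative f z0 * (-2 * gu t - E * z0 * gv t + A)) (at t)" using D by blast
    then show "(gv has_field_derivative fst (snd (cscale (f (snd (snd (gu t, gv t, z0)))) (Vz A B C E (gu t, gv t, z0))))) (at t)"
      by (simp add: cscale_def Vz_def algebra_simps)
  qed
qed

theorem corollary2p3:
  fixes A B C D E :: complex and f :: "complex \<Rightarrow> complex"
  assumes "E \<noteq> 0" and "f holomorphic_on UNIV"
  shows "complete_vf (Msurf A B C D E) (\<lambda>p. cscale (f (fst p)) (Vx A B C E p))
       \<and> complete_vf (Msurf A B C D E) (\<lambda>p. cscale (f (fst (snd p))) (Vy A B C E p))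
       \<and> complete_vf (Msurf A B C D E) (\<lambda>p. cscale (f (snd (snd p))) (Vz A B C E p))"
  using cvx cvy cvz by blast

end
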